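(* Let $X$ be a topological space in which every $\Lambda$-set is a $G_\delta$-set, and suppose that for each pair of disjoint $F_\sigma$-sets $F_0,F_1$ in $X$ there exist $G_\delta$-sets $G_0,G_1$ with $F_0\subseteq G_0$, $F_1\subseteq G_1$ and $G_0\cap G_1=\varnothing$. Let $g,f:X\to\mathbb{R}$ be functions such that $f$ is lower semi-Baire-one, $g$ is upper semi-Baire-one, and $f\le g$. Then there exists a Baire-one function $h:X\to\mathbb{R}$ such that $f\le h\le g$.
   Context: A $\Lambda$-set in $X$ is an intersection of open sets. A function $f:X\to\mathbb{R}$ is upper semi-Baire-one (resp. lower semi-Baire-one) if $f^{-1}(-\infty,t)$ (resp. $f^{-1}(t,+\infty)$) is an $F_\sigma$-set in $X$ for every real $t$. A function $h:X\to\mathbb{R}$ is Baire-one if the preimage of every open subset of $\mathbb{R}$ is an $F_\sigma$-set in $X$. $f\le g$ means $f(x)\le g(x)$ for all $x\in X$. *)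

theory Defs
  imports "HOL-Analysis.Analysis"
begin

definition lambda_set_in :: "'a topology \<Rightarrow> 'a set \<Rightarrow> bool" where
  "lambda_set_in X S \<equiv> (\<exists>\<U>. (\<forall>U\<in>\<U>. openin X U) \<and> S = topspace X \<inter> \<Inter>\<U>)"

definition upper_semi_baire_one :: "'a topology \<Rightarrow> ('a \<Rightarrow> real) \<Rightarrow> bool" where
  "upper_semi_baire_one X f \<equiv> (\<forall>t. fsigma_in X {x \<in> topspace X. f x < t})"

definition lower_semi_baire_one :: "'a topology \<Rightarrow> ('a \<Rightarrow> real) \<Rightarrow> bool" where
  "lower_semi_baire_one X f \<equiv> (\<forall>t. fsigma_in X {x \<in> topspace X. f x > t})"

definition baire_one :: "'a topology \<Rightarrow> ('a \<Rightarrow> real) \<Rightarrow> bool" where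
  "baire_one X h \<equiv> (\<forall>U. open U \<longrightarrow> fsigma_in X {x \<in> topspace X. h x \<in> U})"

end

theory Submission
  imports Defs
begin

definition Khull :: "'a topology \<Rightarrow> 'a set \<Rightarrow> 'a set" where
  "Khull X A = topspace X \<inter> \<Inter>{U. openin X U \<and> A \<subseteq> U}"

lemma Khull_min:
  assumes "gdelta_in X G" "A \<subseteq> G"
  shows "Khull X A \<subseteq> G"
proof
  fix x assume x: "x \<in> Khull X A"
  from assms(1) have sub: "G \<subseteq> topspace X" and ci: "(countable intersection_of openin X) G"
    by (auto simp: gdelta_in_alt)
  from ci obtain \<U> where U: "countable \<U>" "\<forall>U\<in>\<U>. openin X U" "\<Inter>\<U> = G"
    by (auto simp: intersection_of_def)
  have "\<forall>U\<in>\<U>. x \<in> U"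
  proof
    fix U assume "U \<in> \<U>"
    then have "openin X U" "A \<subseteq> U" using U assms(2) by auto
    then show "x \<in> U" using x by (auto simp: Khull_def)
  qed
  then show "x \<in> G" using U by auto
qed

lemma Khull_sup: "A \<subseteq> topspace X \<Longrightarrow> A \<subseteq> Khull X A"
  by (auto simp: Khull_def)

lemma Khull_sub: "Khull X A \<subseteq> topspace X"
  by (auto simp: Khull_def)

lemma Khull_mono: "A \<subseteq> B \<Longrightarrow> Khull X A \<subseteq> Khull X B"
  by (auto simp: Khull_def)

lemma Khull_lambda: "lambda_set_in X (Khull X A)"
  unfolding lambda_set_in_def Khull_def
  by (rule exI[of _ "{U. openin X U \<and> A \<subseteq> U}"]) simp

lemma Khull_fsigma:
  assumes A1: "\<And>S. lambda_set_in X S \<Longrightarrow> gdelta_in X S"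
    and A2: "\<And>F0 F1. \<lbrakk>fsigma_in X F0; fsigma_in X F1; F0 \<inter> F1 = {}\<rbrakk> \<Longrightarrow>
           \<exists>G0 G1. gdelta_in X G0 \<and> gdelta_in X G1 \<and> F0 \<subseteq> G0 \<and> F1 \<subseteq> G1 \<and> G0 \<inter> G1 = {}"
    and F: "fsigma_in X A"
  shows "fsigma_in X (Khull X A)"
proof -
  let ?C = "Khull X A"
  have gC: "gdelta_in X ?C" using A1 Khull_lambda by blast
  have fB: "fsigma_in X (topspace X - ?C)" using gC gdelta_in_fsigma_in by blast
  have As: "A \<subseteq> ?C" using Khull_sup fsigma_in_subset[OF F] by blast
  have "A \<inter> (topspace X - ?C) = {}" using As by blast
  then obtain G0 G1 where G: "gdelta_in X G0" "gdelta_in X G1" "A \<subseteq> G0"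
      "topspace X - ?C \<subseteq> G1" "G0 \<inter> G1 = {}"
    using A2[OF F fB] by blast
  have "?C \<subseteq> G0" using Khull_min G by blast
  then have "?C = topspace X - G1" using G Khull_sub[of X A] by blast
  moreover have "fsigma_in X (topspace X - G1)"
    using G(2) gdelta_in_fsigma_in by blast
  ultimately show ?thesis by simp
qed

lemma Union_fsigma:
  assumes A1: "\<And>S. lambda_set_in X S \<Longrightarrow> gdelta_in X S"
    and F: "\<And>A. A \<in> \<F> \<Longrightarrow> fsigma_in X A"
  shows "fsigma_in X (\<Union>\<F>)"
proof (cases "\<F> = {}")
  case True then show ?thesis by simp
next
  case False
  let ?S = "topspace X - \<Union>\<F>"
  have "Khull X ?S \<subseteq> ?S"
  proof
    fix x assume x: "x \<in> Khull X ?S"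
    have "x \<notin> A" if "A \<in> \<F>" for A
    proof -
      have "gdelta_in X (topspace X - A)"
        using F[OF that] fsigma_in_subset[OF F[OF that]]
        by (simp add: gdelta_in_fsigma_in Diff_Diff_Int inf.absorb2)
      then have "Khull X ?S \<subseteq> topspace X - A" using Khull_min[of X "topspace X - A" ?S] that by blast
      then show ?thesis using x by blast
    qed
    moreover have "x \<in> topspace X" using x Khull_sub[of X ?S] by blast
    ultimately show "x \<in> ?S" by blast
  qed
  moreover have "?S \<subseteq> Khull X ?S" by (rule Khull_sup) blast
  ultimately have "Khull X ?S = ?S" by (rule antisym)
  then have "gdelta_in X ?S" using A1 Khull_lambda by metis
  then have "fsigma_in X (topspace X - ?S)" using gdelta_in_fsigma_in by blast
  moreover have "\<Union>\<F> \<subseteq> topspace X" using F fsigma_in_subset by (meson Union_least)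
  then have "topspace X - ?S = \<Union>\<F>" by (simp add: Diff_Diff_Int inf.absorb2)
  ultimately show ?thesis by simp
qed

theorem corollary4:
  fixes X :: "'a topology" and f g :: "'a \<Rightarrow> real"
  assumes "\<And>S. lambda_set_in X S \<Longrightarrow> gdelta_in X S"
    and "\<And>F0 F1. \<lbrakk>fsigma_in X F0; fsigma_in X F1; F0 \<inter> F1 = {}\<rbrakk> \<Longrightarrow>
           \<exists>G0 G1. gdelta_in X G0 \<and> gdelta_in X G1 \<and> F0 \<subseteq> G0 \<and> F1 \<subseteq> G1 \<and> G0 \<inter> G1 = {}"
    and "lower_semi_baire_one X f"
    and "upper_semi_baire_one X g"
    and "\<And>x. x \<in> topspace X \<Longrightarrow> f x \<le> g x"
  shows "\<exists>h. baire_one X h \<and> (\<forall>x\<in>topspace X. f x \<le> h x \<and> h x \<le> g x)"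
proof -
  note A1 = assms(1) and A2 = assms(2)
  define C where "C t = Khull X {x \<in> topspace X. f x > t}" for t
  define h where "h x = Sup {t. x \<in> C t}" for x
  have Cf: "fsigma_in X (C t)" for t
    unfolding C_def using Khull_fsigma[OF A1 A2] assms(3) lower_semi_baire_one_def by blast
  have Cg: "gdelta_in X (C t)" for t
    unfolding C_def using A1 Khull_lambda by blast
  have Cmono: "t' \<le> t \<Longrightarrow> C t \<subseteq> C t'" for t t'
    unfolding C_def by (rule Khull_mono) auto
  have Csub: "C t \<subseteq> topspace X" for t unfolding C_def by (rule Khull_sub)
  have Cfin: "{x \<in> topspace X. f x > t} \<subseteq> C t" for t
    unfolding C_def by (rule Khull_sup) auto
  have Cgle: "C t \<subseteq> {x \<in> topspace X. g x \<ge> t}" for t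
  proof -
    have e: "{x \<in> topspace X. g x \<ge> t} = topspace X - {x \<in> topspace X. g x < t}" by auto
    have "gdelta_in X {x \<in> topspace X. g x \<ge> t}"
      unfolding e using assms(4) unfolding upper_semi_baire_one_def
      by (simp add: gdelta_in_fsigma_in Diff_Diff_Int inf.absorb2 fsigma_in_subset)
    moreover have "{x \<in> topspace X. f x > t} \<subseteq> {x \<in> topspace X. g x \<ge> t}"
      using assms(5) by force
    ultimately show ?thesis unfolding C_def by (rule Khull_min)
  qed
  have ne: "{t. x \<in> C t} \<noteq> {}" if "x \<in> topspace X" for x
    using Cfin[of "f x - 1"] that by auto
  have bdd: "bdd_above {t. x \<in> C t}" if "x \<in> topspace X" for x
    unfolding bdd_above_def using Cgle by blast
  have fh: "f x \<le> h x" if x: "x \<in> topspace X" for x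
  proof (rule dense_le)
    fix y assume "y < f x"
    then have "x \<in> C y" using Cfin x by blast
    then show "y \<le> h x" unfolding h_def by (intro cSup_upper) (use bdd[OF x] in auto)
  qed
  have hg: "h x \<le> g x" if x: "x \<in> topspace X" for x
    unfolding h_def using Cgle x ne[OF x] by (intro cSup_least) auto
  have gt: "{x \<in> topspace X. h x > s} = \<Union>{C t | t. t > s}" for s
  proof
    show "{x \<in> topspace X. h x > s} \<subseteq> \<Union>{C t | t. t > s}"
    proof
      fix x assume "x \<in> {x \<in> topspace X. h x > s}"
      then have x: "x \<in> topspace X" "s < Sup {t. x \<in> C t}" unfolding h_def by auto
      then obtain t where "x \<in> C t" "s < t" using less_cSup_iff[OF ne bdd] by blast
      then show "x \<in> \<Union>{C t | t. t > s}" by blast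
    qed
    show "\<Union>{C t | t. t > s} \<subseteq> {x \<in> topspace X. h x > s}"
    proof
      fix x assume "x \<in> \<Union>{C t | t. t > s}"
      then obtain t where t: "x \<in> C t" "s < t" by blast
      then have x: "x \<in> topspace X" using Csub by blast
      have "t \<le> h x" unfolding h_def by (intro cSup_upper) (use t bdd[OF x] in auto)
      then show "x \<in> {x \<in> topspace X. h x > s}" using t x by auto
    qed
  qed
  have lt: "{x \<in> topspace X. h x < s} = \<Union>{topspace X - C r | r. r < s}" for s
  proof
    show "{x \<in> topspace X. h x < s} \<subseteq> \<Union>{topspace X - C r | r. r < s}"
    proof
      fix x assume "x \<in> {x \<in> topspace X. h x < s}"
      then have x: "x \<in> topspace X" "h x < s" by auto
      define r where "r = (h x + s) / 2"
      have "x \<notin> C r"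
      proof
        assume "x \<in> C r"
        then have "r \<le> h x" unfolding h_def by (intro cSup_upper) (use bdd[OF x(1)] in auto)
        then show False using x unfolding r_def by auto
      qed
      moreover have "r < s" using x unfolding r_def by auto
      ultimately show "x \<in> \<Union>{topspace X - C r | r. r < s}" using x by blast
    qed
    show "\<Union>{topspace X - C r | r. r < s} \<subseteq> {x \<in> topspace X. h x < s}"
    proof
      fix x assume "x \<in> \<Union>{topspace X - C r | r. r < s}"
      then obtain r where r: "x \<in> topspace X" "x \<notin> C r" "r < s" by blast
      have "h x \<le> r" unfolding h_def
      proof (rule cSup_least)
        show "{t. x \<in> C t} \<noteq> {}" using ne r by blast
        fix t assume "t \<in> {t. x \<in> C t}"
        then show "t \<le> r" using Cmono[of r t] r by force
      qed
      then show "x \<in> {x \<in> topspace X. h x < s}" using r by auto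
    qed
  qed
  have gtf: "fsigma_in X {x \<in> topspace X. h x > s}" for s
    unfolding gt by (rule Union_fsigma[OF A1]) (auto intro: Cf)
  have ltf: "fsigma_in X {x \<in> topspace X. h x < s}" for s
    unfolding lt by (rule Union_fsigma[OF A1]) (use Cg in \<open>auto simp: gdelta_in_fsigma_in\<close>)
  have "baire_one X h"
    unfolding baire_one_def
  proof (intro allI impI)
    fix U :: "real set" assume U: "open U"
    have eq: "{x \<in> topspace X. h x \<in> U} =
      \<Union>{{x \<in> topspace X. h x > a} \<inter> {x \<in> topspace X. h x < b} | a b. {a<..<b} \<subseteq> U}"
    proof
      show "{x \<in> topspace X. h x \<in> U} \<subseteq>
        \<Union>{{x \<in> topspace X. h x > a} \<inter> {x \<in> topspace X. h x < b} | a b. {a<..<b} \<subseteq> U}"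
      proof
        fix x assume x: "x \<in> {x \<in> topspace X. h x \<in> U}"
        then obtain e where e: "e > 0" "ball (h x) e \<subseteq> U" using U open_contains_ball by blast
        have "{h x - e<..<h x + e} \<subseteq> U" using e by (auto simp: dist_real_def subset_iff)
        moreover have "x \<in> {x \<in> topspace X. h x > h x - e} \<inter> {x \<in> topspace X. h x < h x + e}"
          using x e by auto
        ultimately show "x \<in> \<Union>{{x \<in> topspace X. h x > a} \<inter> {x \<in> topspace X. h x < b} | a b. {a<..<b} \<subseteq> U}"
          by blast
      qed
    next show "\<Union>{{x \<in> topspace X. h x > a} \<inter> {x \<in> topspace X. h x < b} | a b. {a<..<b} \<subseteq> U} \<subseteq> {x \<in> topspace X. h x \<in> U}" by fastforce qed
    show "fsigma_in X {x \<in> topspace X. h x \<in> U}"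
      unfolding eq by (rule Union_fsigma[OF A1]) (auto intro!: fsigma_in_Int gtf ltf)
  qed
  then show ?thesis using fh hg by blast
qed

end
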